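(* Let $\Lambda$ be a source-free, finite, primitive, non-empty $k$-graph with shift $\sigma=(\sigma_1,\dots,\sigma_k)$ on its infinite-path space $\Lambda^\infty$. For every $p\in\mathbb{N}^k$ with $p\ge(1,\dots,1)$, the local homeomorphism $\sigma^p:\Lambda^\infty\to\Lambda^\infty$ is positively expansive and exact.
   Context: A $k$-graph is a countable category $\Lambda$ with a functor $d:\Lambda\to\mathbb{N}^k$ (degree) such that for every $\lambda\in\Lambda$ and $m,n\in\mathbb{N}^k$ with $d(\lambda)=m+n$ there are unique $\mu,\nu$ with $d(\mu)=m$, $d(\nu)=n$, $\lambda=\mu\nu$. $\Lambda^n=d^{-1}(n)$; $\Lambda^0$ are the vertices; $v\Lambda^n w=\{\lambda\in\Lambda^n: r(\lambda)=v,\ s(\lambda)=w\}$. $\Lambda$ is finite if each $\Lambda^n$ is finite, source-free if $v\Lambda^n\neq\varnothing$ for all $v,n$, primitive if there is $n\in\mathbb{N}^k\setminus\{0\}$ with $v\Lambda^n w\neq\varnothing$ for all vertices $v,w$. $\Omega_k$ is the $k$-graph with morphisms $\{(m,n)\in\mathbb{N}^k\times\mathbb{N}^k: m\le n\}$, $(l,m)(m,n)=(l,n)$, $d(m,n)=n-m$. $\Lambda^\infty$ is the set of degree-preserving functors $x:\Omega_k\to\Lambda$, with topology generated by cylinder sets $\mathcal{Z}(\lambda)=\{x: x(0,d(\lambda))=\lambda\}$; it is compact Hausdorff. The shift is $\sigma_i(x)(m,n)=x(m+\mathbf{e}_i,n+\mathbf{e}_i)$, so $\sigma^l(x)(m,n)=x(m+l,n+l)$.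 A map $T$ on a compact metric space $(X,d)$ is positively expansive if there is $\epsilon>0$ such that for all distinct $x,y$ there is $n\in\mathbb{N}$ with $d(T^n x,T^n y)\ge\epsilon$; it is exact if for every nonempty open $U$ there is $n$ with $T^n(U)=X$. (A compatible metric on $\Lambda^\infty$ is $\rho_\Lambda(x,y)=2^{-N_{xy}}$, $N_{xy}=\min\{n\in\mathbb{N}: x(nq,(n+1)q)\neq y(nq,(n+1)q)\}$ for a fixed $q\ge(1,\dots,1)$, $\min\varnothing=\infty$.) *)

theory Defs
  imports "HOL-Analysis.Analysis" "HOL-Library.Function_Algebras"
begin

text \<open>A k-graph is encoded as a small category whose morphisms form the set L of
 elements of type 'a; objects are identified with their identity morphisms.
 r, s are range and source, cmp mu nu is the composite (mu after nu, i.e. mu nu with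
 s mu = r nu), and d is the degree functor into N^k, where N^k is modelled as
 'k \<Rightarrow> nat for a finite type 'k with CARD('k) = k.\<close>

definition kg_vertices :: "'a set \<Rightarrow> ('a \<Rightarrow> 'a) \<Rightarrow> ('a \<Rightarrow> 'a) \<Rightarrow> 'a set" where
  "kg_vertices L r s = {v \<in> L. r v = v \<and> s v = v}"

definition is_kgraph ::
  "'a set \<Rightarrow> ('a \<Rightarrow> 'a) \<Rightarrow> ('a \<Rightarrow> 'a) \<Rightarrow> ('a \<Rightarrow> 'a \<Rightarrow> 'a)
    \<Rightarrow> ('a \<Rightarrow> ('k::finite \<Rightarrow> nat)) \<Rightarrow> bool" where
  "is_kgraph L r s cmp d \<longleftrightarrow>
     countable L \<and>
     (\<forall>lam\<in>L. r lam \<in> kg_vertices L r s \<and> s lam \<in> kg_vertices L r s) \<and>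
     (\<forall>\<mu>\<in>L. \<forall>\<nu>\<in>L. s \<mu> = r \<nu> \<longrightarrow>
        cmp \<mu> \<nu> \<in> L \<and> r (cmp \<mu> \<nu>) = r \<mu> \<and> s (cmp \<mu> \<nu>) = s \<nu> \<and>
        d (cmp \<mu> \<nu>) = d \<mu> + d \<nu>) \<and>
     (\<forall>lam\<in>L. cmp (r lam) lam = lam \<and> cmp lam (s lam) = lam) \<and>
     (\<forall>lam\<in>L. \<forall>\<mu>\<in>L. \<forall>\<nu>\<in>L. s lam = r \<mu> \<longrightarrow> s \<mu> = r \<nu> \<longrightarrow>
        cmp (cmp lam \<mu>) \<nu> = cmp lam (cmp \<mu> \<nu>)) \<and>
     (\<forall>v\<in>kg_vertices L r s. d v = 0) \<and>
     (\<forall>lam\<in>L. \<forall>m n. d lam = m + n \<longrightarrow>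
        (\<exists>!p. fst p \<in> L \<and> snd p \<in> L \<and> s (fst p) = r (snd p) \<and>
              d (fst p) = m \<and> d (snd p) = n \<and> cmp (fst p) (snd p) = lam))"

definition kg_finite :: "'a set \<Rightarrow> ('a \<Rightarrow> ('k::finite \<Rightarrow> nat)) \<Rightarrow> bool" where
  "kg_finite L d \<longleftrightarrow> (\<forall>n. finite {lam\<in>L. d lam = n})"

definition kg_source_free ::
  "'a set \<Rightarrow> ('a \<Rightarrow> 'a) \<Rightarrow> ('a \<Rightarrow> 'a) \<Rightarrow> ('a \<Rightarrow> ('k::finite \<Rightarrow> nat)) \<Rightarrow> bool" where
  "kg_source_free L r s d \<longleftrightarrow>
     (\<forall>v\<in>kg_vertices L r s. \<forall>n. \<exists>lam\<in>L. r lam = v \<and> d lam = n)"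

definition kg_primitive ::
  "'a set \<Rightarrow> ('a \<Rightarrow> 'a) \<Rightarrow> ('a \<Rightarrow> 'a) \<Rightarrow> ('a \<Rightarrow> ('k::finite \<Rightarrow> nat)) \<Rightarrow> bool" where
  "kg_primitive L r s d \<longleftrightarrow>
     (\<exists>n. n \<noteq> 0 \<and> (\<forall>v\<in>kg_vertices L r s. \<forall>w\<in>kg_vertices L r s.
          \<exists>lam\<in>L. d lam = n \<and> r lam = v \<and> s lam = w))"

text \<open>Infinite paths: degree-preserving functors x from Omega_k to the k-graph.
 x m n is the image of the morphism (m,n) of Omega_k (m \<le> n); outside m \<le> n the
 function is fixed to undefined so that paths are determined by their values on Omega_k.\<close>

definition kg_paths ::
  "'a set \<Rightarrow> ('a \<Rightarrow> 'a) \<Rightarrow> ('a \<Rightarrow> 'a) \<Rightarrow> ('a \<Rightarrow> 'a \<Rightarrow> 'a) \<Rightarrow> ('a \<Rightarrow> ('k::finite \<Rightarrow> nat))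
    \<Rightarrow> (('k \<Rightarrow> nat) \<Rightarrow> ('k \<Rightarrow> nat) \<Rightarrow> 'a) set" where
  "kg_paths L r s cmp d =
     {x. (\<forall>m n. \<not> m \<le> n \<longrightarrow> x m n = undefined) \<and>
         (\<forall>m n. m \<le> n \<longrightarrow> x m n \<in> L \<and> d (x m n) = n - m \<and>
                r (x m n) = x m m \<and> s (x m n) = x n n) \<and>
         (\<forall>l m n. l \<le> m \<longrightarrow> m \<le> n \<longrightarrow> x l n = cmp (x l m) (x m n))}"

definition kg_shift ::
  "('k::finite \<Rightarrow> nat) \<Rightarrow> (('k \<Rightarrow> nat) \<Rightarrow> ('k \<Rightarrow> nat) \<Rightarrow> 'a)
    \<Rightarrow> (('k \<Rightarrow> nat) \<Rightarrow> ('k \<Rightarrow> nat) \<Rightarrow> 'a)" where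
  "kg_shift l x = (\<lambda>m n. if m \<le> n then x (m + l) (n + l) else undefined)"

definition kg_cylinder ::
  "'a set \<Rightarrow> ('a \<Rightarrow> 'a) \<Rightarrow> ('a \<Rightarrow> 'a) \<Rightarrow> ('a \<Rightarrow> 'a \<Rightarrow> 'a) \<Rightarrow> ('a \<Rightarrow> ('k::finite \<Rightarrow> nat))
    \<Rightarrow> 'a \<Rightarrow> (('k \<Rightarrow> nat) \<Rightarrow> ('k \<Rightarrow> nat) \<Rightarrow> 'a) set" where
  "kg_cylinder L r s cmp d lam = {x \<in> kg_paths L r s cmp d. x 0 (d lam) = lam}"

definition kg_topology ::
  "'a set \<Rightarrow> ('a \<Rightarrow> 'a) \<Rightarrow> ('a \<Rightarrow> 'a) \<Rightarrow> ('a \<Rightarrow> 'a \<Rightarrow> 'a) \<Rightarrow> ('a \<Rightarrow> ('k::finite \<Rightarrow> nat))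
    \<Rightarrow> (('k \<Rightarrow> nat) \<Rightarrow> ('k \<Rightarrow> nat) \<Rightarrow> 'a) topology" where
  "kg_topology L r s cmp d =
     subtopology (topology_generated_by (kg_cylinder L r s cmp d ` L)) (kg_paths L r s cmp d)"

definition kg_metric ::
  "('k::finite \<Rightarrow> nat) \<Rightarrow> (('k \<Rightarrow> nat) \<Rightarrow> ('k \<Rightarrow> nat) \<Rightarrow> 'a)
    \<Rightarrow> (('k \<Rightarrow> nat) \<Rightarrow> ('k \<Rightarrow> nat) \<Rightarrow> 'a) \<Rightarrow> real" where
  "kg_metric q x y =
     (let D = {n::nat. x (\<lambda>i. n * q i) (\<lambda>i. (n + 1) * q i) \<noteq> y (\<lambda>i. n * q i) (\<lambda>i. (n + 1) * q i)}
      in if D = {} then 0 else (1/2) ^ (LEAST n. n \<in> D))"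

definition positively_expansive_on ::
  "'b set \<Rightarrow> ('b \<Rightarrow> 'b \<Rightarrow> real) \<Rightarrow> ('b \<Rightarrow> 'b) \<Rightarrow> bool" where
  "positively_expansive_on X \<rho> T \<longleftrightarrow>
     (\<exists>\<epsilon>>0. \<forall>x\<in>X. \<forall>y\<in>X. x \<noteq> y \<longrightarrow> (\<exists>n::nat. \<rho> ((T ^^ n) x) ((T ^^ n) y) \<ge> \<epsilon>))"

definition exact_map :: "'b topology \<Rightarrow> ('b \<Rightarrow> 'b) \<Rightarrow> bool" where
  "exact_map X T \<longleftrightarrow>
     (\<forall>U. openin X U \<longrightarrow> U \<noteq> {} \<longrightarrow> (\<exists>n::nat. (T ^^ n) ` U = topspace X))"

end

theory Submission
  imports Defs
begin

lemma vle_iff: "(a::'k\<Rightarrow>nat) \<le> b \<longleftrightarrow> (\<forall>i. a i \<le> b i)" by (simp add: le_fun_def)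

locale kg =
  fixes L :: "'a set" and r s :: "'a \<Rightarrow> 'a" and cmp :: "'a \<Rightarrow> 'a \<Rightarrow> 'a"
    and d :: "'a \<Rightarrow> ('k::finite \<Rightarrow> nat)"
  assumes kg: "is_kgraph L r s cmp d"
begin

lemma rsV: "lam \<in> L \<Longrightarrow> r lam \<in> L \<and> r (r lam) = r lam \<and> s (r lam) = r lam \<and> d (r lam) = 0
   \<and> s lam \<in> L \<and> r (s lam) = s lam \<and> s (s lam) = s lam \<and> d (s lam) = 0"
  using kg unfolding is_kgraph_def kg_vertices_def by blast

lemma cmpL: "\<mu> \<in> L \<Longrightarrow> \<nu> \<in> L \<Longrightarrow> s \<mu> = r \<nu> \<Longrightarrow>
   cmp \<mu> \<nu> \<in> L \<and> r (cmp \<mu> \<nu>) = r \<mu> \<and> s (cmp \<mu> \<nu>) = s \<nu> \<and> d (cmp \<mu> \<nu>) = d \<mu> + d \<nu>"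
  using kg unfolding is_kgraph_def by blast

lemma idl: "lam \<in> L \<Longrightarrow> cmp (r lam) lam = lam" and idr: "lam \<in> L \<Longrightarrow> cmp lam (s lam) = lam"
  using kg unfolding is_kgraph_def by blast+

lemma assoc: "lam \<in> L \<Longrightarrow> \<mu> \<in> L \<Longrightarrow> \<nu> \<in> L \<Longrightarrow> s lam = r \<mu> \<Longrightarrow> s \<mu> = r \<nu> \<Longrightarrow>
        cmp (cmp lam \<mu>) \<nu> = cmp lam (cmp \<mu> \<nu>)"
  using kg unfolding is_kgraph_def by blast

lemma fac_ex: assumes "lam \<in> L" "d lam = m + n"
  shows "\<exists>\<mu> \<nu>. \<mu> \<in> L \<and> \<nu> \<in> L \<and> s \<mu> = r \<nu> \<and> d \<mu> = m \<and> d \<nu> = n \<and> cmp \<mu> \<nu> = lam"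
proof -
  from kg assms have "\<exists>!p. fst p \<in> L \<and> snd p \<in> L \<and> s (fst p) = r (snd p) \<and>
              d (fst p) = m \<and> d (snd p) = n \<and> cmp (fst p) (snd p) = lam"
    unfolding is_kgraph_def by blast
  then show ?thesis by blast
qed

lemma fac_uniq: assumes "\<mu> \<in> L" "\<nu> \<in> L" "s \<mu> = r \<nu>" "\<mu>' \<in> L" "\<nu>' \<in> L" "s \<mu>' = r \<nu>'"
  "cmp \<mu> \<nu> = cmp \<mu>' \<nu>'" "d \<mu> = d \<mu>'"
  shows "\<mu> = \<mu>' \<and> \<nu> = \<nu>'"
proof -
  let ?lam = "cmp \<mu> \<nu>"
  have L: "?lam \<in> L" "d ?lam = d \<mu> + d \<nu>" using cmpL[OF assms(1,2,3)] by simp_all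
  have "d ?lam = d \<mu>' + d \<nu>'" using cmpL[of \<mu>' \<nu>'] assms(4,5,6,7) by simp
  then have dn: "d \<nu> = d \<nu>'" using L assms(7,8) by (metis add_left_cancel)
  from kg L have "\<exists>!p. fst p \<in> L \<and> snd p \<in> L \<and> s (fst p) = r (snd p) \<and>
              d (fst p) = d \<mu> \<and> d (snd p) = d \<nu> \<and> cmp (fst p) (snd p) = ?lam"
    unfolding is_kgraph_def by blast
  then have "(\<mu>, \<nu>) = (\<mu>', \<nu>')" using assms dn by (metis fst_conv snd_conv)
  then show ?thesis by simp
qed

lemma deg0: assumes "lam \<in> L" "d lam = 0" shows "r lam = lam" "s lam = lam"
proof -
  have a: "r lam \<in> L" "s (r lam) = r lam" "d (r lam) = 0" "s lam \<in> L" "r (s lam) = s lam" using rsV assms by auto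
  have "r lam = lam \<and> lam = s lam"
    by (rule fac_uniq) (use a assms idl[OF assms(1)] idr[OF assms(1)] in auto)
  then show "r lam = lam" "s lam = lam" by auto
qed

definition tri where "tri \<nu> \<alpha> \<omega> \<beta> \<longleftrightarrow> \<alpha> \<in> L \<and> \<omega> \<in> L \<and> \<beta> \<in> L \<and> s \<alpha> = r \<omega> \<and> s \<omega> = r \<beta> \<and> \<nu> = cmp (cmp \<alpha> \<omega>) \<beta>"

definition seg where "seg \<nu> a b = (THE \<omega>. \<exists>\<alpha> \<beta>. tri \<nu> \<alpha> \<omega> \<beta> \<and> d \<alpha> = a \<and> d \<omega> = b - a)"

lemma uniq3: assumes "tri \<nu> \<alpha> \<omega> \<beta>" "tri \<nu> \<alpha>' \<omega>' \<beta>'" "d \<alpha> = d \<alpha>'" "d \<omega> = d \<omega>'"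
  shows "\<alpha> = \<alpha>' \<and> \<omega> = \<omega>' \<and> \<beta> = \<beta>'"
proof -
  have c1: "cmp \<alpha> \<omega> \<in> L" "s (cmp \<alpha> \<omega>) = s \<omega>" "d (cmp \<alpha> \<omega>) = d \<alpha> + d \<omega>"
    using assms(1) cmpL unfolding tri_def by auto
  have c2: "cmp \<alpha>' \<omega>' \<in> L" "s (cmp \<alpha>' \<omega>') = s \<omega>'" "d (cmp \<alpha>' \<omega>') = d \<alpha>' + d \<omega>'"
    using assms(2) cmpL unfolding tri_def by auto
  have "cmp \<alpha> \<omega> = cmp \<alpha>' \<omega>' \<and> \<beta> = \<beta>'"
    by (rule fac_uniq) (use assms c1 c2 in \<open>auto simp: tri_def\<close>)
  moreover then have "\<alpha> = \<alpha>' \<and> \<omega> = \<omega>'"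
    by (intro fac_uniq) (use assms in \<open>auto simp: tri_def\<close>)
  ultimately show ?thesis by simp
qed

lemma seg_eq: assumes "tri \<nu> \<alpha> \<omega> \<beta>" "a = d \<alpha>" "b = d \<alpha> + d \<omega>"
  shows "seg \<nu> a b = \<omega>"
  unfolding seg_def
proof (rule the_equality)
  show "\<exists>\<alpha>' \<beta>'. tri \<nu> \<alpha>' \<omega> \<beta>' \<and> d \<alpha>' = a \<and> d \<omega> = b - a"
    using assms by (auto simp: fun_eq_iff)
  fix \<omega>' assume "\<exists>\<alpha>' \<beta>'. tri \<nu> \<alpha>' \<omega>' \<beta>' \<and> d \<alpha>' = a \<and> d \<omega>' = b - a"
  then obtain \<alpha>' \<beta>' where h: "tri \<nu> \<alpha>' \<omega>' \<beta>'" "d \<alpha>' = a" "d \<omega>' = b - a" by blast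
  have "d \<omega> = b - a" using assms by (auto simp: fun_eq_iff)
  then show "\<omega>' = \<omega>" using uniq3[OF assms(1) h(1)] h assms by auto
qed

lemma tri_ex: assumes "\<nu> \<in> L" "a \<le> b" "b \<le> d \<nu>"
  shows "\<exists>\<alpha> \<omega> \<beta>. tri \<nu> \<alpha> \<omega> \<beta> \<and> d \<alpha> = a \<and> d \<omega> = b - a"
proof -
  have "d \<nu> = b + (d \<nu> - b)" using assms by (auto simp: fun_eq_iff le_fun_def)
  then obtain \<gamma> \<beta> where g: "\<gamma> \<in> L" "\<beta> \<in> L" "s \<gamma> = r \<beta>" "d \<gamma> = b" "cmp \<gamma> \<beta> = \<nu>"
    using fac_ex[OF assms(1)] by blast
  have "d \<gamma> = a + (b - a)" using assms g by (auto simp: fun_eq_iff le_fun_def)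
  then obtain \<alpha> \<omega> where h: "\<alpha> \<in> L" "\<omega> \<in> L" "s \<alpha> = r \<omega>" "d \<alpha> = a" "d \<omega> = b - a" "cmp \<alpha> \<omega> = \<gamma>"
    using fac_ex[OF g(1)] by blast
  have "s \<omega> = r \<beta>" using g h cmpL[of \<alpha> \<omega>] by auto
  then show ?thesis using g h unfolding tri_def by blast
qed

lemma tri_L: "tri \<nu> \<alpha> \<omega> \<beta> \<Longrightarrow> \<nu> \<in> L \<and> d \<nu> = d \<alpha> + d \<omega> + d \<beta>"
  unfolding tri_def using cmpL by (metis)

lemma seg_props: assumes "\<nu> \<in> L" "a \<le> b" "b \<le> d \<nu>"
  shows "seg \<nu> a b \<in> L" "d (seg \<nu> a b) = b - a"
proof -
  obtain \<alpha> \<omega> \<beta> where h: "tri \<nu> \<alpha> \<omega> \<beta>" "d \<alpha> = a" "d \<omega> = b - a" using tri_ex[OF assms] by blast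
  have "seg \<nu> a b = \<omega>" by (rule seg_eq[OF h(1)]) (use h assms in \<open>auto simp: fun_eq_iff le_fun_def\<close>)
  then show "seg \<nu> a b \<in> L" "d (seg \<nu> a b) = b - a" using h by (auto simp: tri_def)
qed

lemma seg_ext: assumes "\<nu> \<in> L" "\<gamma> \<in> L" "s \<nu> = r \<gamma>" "a \<le> b" "b \<le> d \<nu>"
  shows "seg (cmp \<nu> \<gamma>) a b = seg \<nu> a b"
proof -
  obtain \<alpha> \<omega> \<beta> where h: "tri \<nu> \<alpha> \<omega> \<beta>" "d \<alpha> = a" "d \<omega> = b - a" using tri_ex[OF assms(1,4,5)] by blast
  have bb: "b = d \<alpha> + d \<omega>" using h assms by (auto simp: fun_eq_iff le_fun_def)
  have 1: "seg \<nu> a b = \<omega>" by (rule seg_eq[OF h(1)]) (use h bb in auto)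
  have aw: "cmp \<alpha> \<omega> \<in> L" "s (cmp \<alpha> \<omega>) = s \<omega>" using h(1) cmpL unfolding tri_def by auto
  have sb: "s \<beta> = r \<gamma>" using h(1) assms(3) cmpL[of "cmp \<alpha> \<omega>" \<beta>] aw unfolding tri_def by auto
  have "tri (cmp \<nu> \<gamma>) \<alpha> \<omega> (cmp \<beta> \<gamma>)"
    using h(1) aw sb assms cmpL[of \<beta> \<gamma>] assoc[of "cmp \<alpha> \<omega>" \<beta> \<gamma>] unfolding tri_def by auto
  then have "seg (cmp \<nu> \<gamma>) a b = \<omega>" by (rule seg_eq) (use h bb in auto)
  then show ?thesis using 1 by simp
qed

abbreviation "P \<equiv> kg_paths L r s cmp d"

lemma pathD: "x \<in> P \<Longrightarrow> m \<le> n \<Longrightarrow> x m n \<in> L \<and> d (x m n) = n - m \<and> r (x m n) = x m m \<and> s (x m n) = x n n"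
  unfolding kg_paths_def by blast
lemma pathC: "x \<in> P \<Longrightarrow> l \<le> m \<Longrightarrow> m \<le> n \<Longrightarrow> x l n = cmp (x l m) (x m n)"
  unfolding kg_paths_def by blast
lemma pathU: "x \<in> P \<Longrightarrow> \<not> m \<le> n \<Longrightarrow> x m n = undefined"
  unfolding kg_paths_def by blast

lemma prefix: assumes "x \<in> P" "y \<in> P" "a \<le> b" "b \<le> c" "x a c = y a c"
  shows "x a b = y a b \<and> x b c = y b c"
proof (rule fac_uniq)
  show "cmp (x a b) (x b c) = cmp (y a b) (y b c)" using assms pathC by metis
qed (use assms pathD in auto)

definition cc :: "'a \<Rightarrow> (('k \<Rightarrow> nat) \<Rightarrow> ('k \<Rightarrow> nat) \<Rightarrow> 'a) \<Rightarrow> (('k \<Rightarrow> nat) \<Rightarrow> ('k \<Rightarrow> nat) \<Rightarrow> 'a)" where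
  "cc lam y = (\<lambda>a b. if a \<le> b then seg (cmp lam (y 0 b)) a b else undefined)"

context
  fixes lam y assumes lamL: "lam \<in> L" and yP: "y \<in> P" and sl: "s lam = y 0 0"
begin

lemma nuL: "cmp lam (y 0 c) \<in> L \<and> d (cmp lam (y 0 c)) = d lam + c"
proof -
  have "y 0 c \<in> L" "r (y 0 c) = y 0 0" "d (y 0 c) = c" using pathD[OF yP, of 0 c] by auto
  then show ?thesis using cmpL[OF lamL, of "y 0 c"] sl by auto
qed

lemma cc_any0: assumes "a \<le> b" "b \<le> c"
  shows "cc lam y a b = seg (cmp lam (y 0 c)) a b"
proof -
  have e: "y 0 c = cmp (y 0 b) (y b c)" using pathC[OF yP, of 0 b c] assms by auto
  have 1: "y 0 b \<in> L" "r (y 0 b) = y 0 0" "s (y 0 b) = y b b" using pathD[OF yP, of 0 b] by auto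
  have 2: "y b c \<in> L" "r (y b c) = y b b" using pathD[OF yP, of b c] assms by auto
  have "cmp lam (y 0 c) = cmp (cmp lam (y 0 b)) (y b c)"
    using e assoc[OF lamL 1(1) 2(1)] 1 2 sl by simp
  moreover have "seg (cmp (cmp lam (y 0 b)) (y b c)) a b = seg (cmp lam (y 0 b)) a b"
    by (rule seg_ext) (use nuL 1 2 assms cmpL[OF lamL 1(1)] sl in \<open>auto simp: le_fun_def\<close>)
  ultimately show ?thesis using assms unfolding cc_def by simp
qed

lemma cc_any: assumes "a \<le> b" "b \<le> d lam + c"
  shows "cc lam y a b = seg (cmp lam (y 0 c)) a b"
proof -
  have bc: "b \<le> sup b c" "c \<le> sup b c" by auto
  have e: "y 0 (sup b c) = cmp (y 0 c) (y c (sup b c))" using pathC[OF yP, of 0 c "sup b c"] bc by auto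
  have 1: "y 0 c \<in> L" "r (y 0 c) = y 0 0" "s (y 0 c) = y c c" using pathD[OF yP, of 0 c] by auto
  have 2: "y c (sup b c) \<in> L" "r (y c (sup b c)) = y c c" using pathD[OF yP, of c "sup b c"] bc by auto
  have "cmp lam (y 0 (sup b c)) = cmp (cmp lam (y 0 c)) (y c (sup b c))"
    using e assoc[OF lamL 1(1) 2(1)] 1 2 sl by simp
  moreover have "seg (cmp (cmp lam (y 0 c)) (y c (sup b c))) a b = seg (cmp lam (y 0 c)) a b"
    by (rule seg_ext) (use nuL 1 2 assms cmpL[OF lamL 1(1)] sl in auto)
  ultimately show ?thesis using cc_any0[OF assms(1) bc(1)] by simp
qed

lemma cc_path: "cc lam y \<in> P"
  unfolding kg_paths_def
proof (intro CollectI conjI allI impI)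
  fix m n :: "'k \<Rightarrow> nat" assume "\<not> m \<le> n" then show "cc lam y m n = undefined" by (simp add: cc_def)
next
  fix a b :: "'k \<Rightarrow> nat" assume ab: "a \<le> b"
  let ?\<nu> = "cmp lam (y 0 b)"
  have nb: "?\<nu> \<in> L" "b \<le> d ?\<nu>" using nuL[of b] by (auto simp: le_fun_def)
  have ccab: "cc lam y a b = seg ?\<nu> a b" using ab by (simp add: cc_def)
  obtain \<alpha> \<omega> \<beta> where h: "tri ?\<nu> \<alpha> \<omega> \<beta>" "d \<alpha> = a" "d \<omega> = b - a" using tri_ex[OF nb(1) ab nb(2)] by blast
  have bb: "b = d \<alpha> + d \<omega>" using h ab by (auto simp: fun_eq_iff le_fun_def)
  have w: "seg ?\<nu> a b = \<omega>" by (rule seg_eq[OF h(1)]) (simp_all only: h(2) bb)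
  show "cc lam y a b \<in> L" "d (cc lam y a b) = b - a" using ccab w h by (auto simp: tri_def)
  have hL: "\<alpha> \<in> L" "\<omega> \<in> L" "\<beta> \<in> L" "s \<alpha> = r \<omega>" "s \<omega> = r \<beta>" "?\<nu> = cmp (cmp \<alpha> \<omega>) \<beta>"
    using h(1) unfolding tri_def by auto
  have rw: "r \<omega> \<in> L" "d (r \<omega>) = 0" "s (r \<omega>) = r \<omega>" "r (r \<omega>) = r \<omega>" using rsV[OF hL(2)] by auto
  have sw: "s \<omega> \<in> L" "d (s \<omega>) = 0" "s (s \<omega>) = s \<omega>" "r (s \<omega>) = s \<omega>" using rsV[OF hL(2)] by auto
  have c1: "cmp \<omega> \<beta> \<in> L" "r (cmp \<omega> \<beta>) = r \<omega>" using cmpL[OF hL(2,3,5)] by auto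
  have c2: "cmp \<alpha> \<omega> \<in> L" "s (cmp \<alpha> \<omega>) = s \<omega>" "d (cmp \<alpha> \<omega>) = a + d \<omega>" using cmpL[OF hL(1,2,4)] h by auto
  have "tri ?\<nu> \<alpha> (r \<omega>) (cmp \<omega> \<beta>)"
    unfolding tri_def using hL rw c1 idr[OF hL(1)] assoc[OF hL(1,2,3) hL(4,5)] by auto
  then have "seg ?\<nu> a a = r \<omega>" by (rule seg_eq) (use h rw in auto)
  moreover have "cc lam y a a = seg ?\<nu> a a" by (rule cc_any) (use ab in \<open>auto simp: le_fun_def intro: trans_le_add2\<close>)
  ultimately show "r (cc lam y a b) = cc lam y a a" using ccab w by simp
  have "tri ?\<nu> (cmp \<alpha> \<omega>) (s \<omega>) \<beta>"
    unfolding tri_def using hL sw c2 idr[OF hL(2)] idr[OF c2(1)] by auto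
  then have "seg ?\<nu> (d (cmp \<alpha> \<omega>)) (d (cmp \<alpha> \<omega>) + d (s \<omega>)) = s \<omega>" by (rule seg_eq) simp_all
  moreover have db: "d (cmp \<alpha> \<omega>) = b" using c2(3) h(2) bb by simp
  ultimately have "seg ?\<nu> b b = s \<omega>" using sw(2) by simp
  moreover have "cc lam y b b = seg ?\<nu> b b" by (simp add: cc_def)
  ultimately show "s (cc lam y a b) = cc lam y b b" using ccab w by simp
next
  fix a b c :: "'k \<Rightarrow> nat" assume ab: "a \<le> b" and bc: "b \<le> c"
  let ?\<nu> = "cmp lam (y 0 c)"
  have ac: "a \<le> c" using ab bc by (rule order_trans)
  have nb: "?\<nu> \<in> L" "c \<le> d ?\<nu>" using nuL[of c] by (auto simp: le_fun_def)
  obtain \<alpha> \<omega> \<beta> where h: "tri ?\<nu> \<alpha> \<omega> \<beta>" "d \<alpha> = a" "d \<omega> = c - a" using tri_ex[OF nb(1) ac nb(2)] by blast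
  have hL: "\<alpha> \<in> L" "\<omega> \<in> L" "\<beta> \<in> L" "s \<alpha> = r \<omega>" "s \<omega> = r \<beta>" "?\<nu> = cmp (cmp \<alpha> \<omega>) \<beta>"
    using h(1) unfolding tri_def by auto
  have "d \<omega> = (b - a) + (c - b)" using h ab bc by (auto simp: fun_eq_iff le_fun_def)
  then obtain \<omega>1 \<omega>2 where w: "\<omega>1 \<in> L" "\<omega>2 \<in> L" "s \<omega>1 = r \<omega>2" "d \<omega>1 = b - a" "d \<omega>2 = c - b" "cmp \<omega>1 \<omega>2 = \<omega>"
    using fac_ex[OF hL(2)] by blast
  have r1: "r \<omega>1 = r \<omega>" "s \<omega>2 = s \<omega>" using cmpL[OF w(1,2,3)] w(6) by auto
  have c21: "cmp \<omega>2 \<beta> \<in> L" "r (cmp \<omega>2 \<beta>) = r \<omega>2" using cmpL[OF w(2) hL(3)] hL r1 by auto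
  have c11: "cmp \<alpha> \<omega>1 \<in> L" "s (cmp \<alpha> \<omega>1) = s \<omega>1" "d (cmp \<alpha> \<omega>1) = a + (b - a)" using cmpL[OF hL(1) w(1)] hL r1 h w by auto
  have t1: "tri ?\<nu> \<alpha> \<omega>1 (cmp \<omega>2 \<beta>)"
    unfolding tri_def using hL w r1 c21 assoc[OF hL(1,2,3) hL(4,5)] assoc[OF hL(1) w(1,2)] assoc[OF w(1,2) hL(3)]
      assoc[OF hL(1) w(1) c21(1)] by auto
  have t2: "tri ?\<nu> (cmp \<alpha> \<omega>1) \<omega>2 \<beta>"
    unfolding tri_def using hL w r1 c11 assoc[OF hL(1) w(1,2)] by auto
  have "seg ?\<nu> a b = \<omega>1" by (rule seg_eq[OF t1]) (use h w ab in \<open>auto simp: fun_eq_iff le_fun_def\<close>)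
  moreover have "seg ?\<nu> b c = \<omega>2" by (rule seg_eq[OF t2]) (use c11 w ab bc in \<open>auto simp: fun_eq_iff le_fun_def\<close>)
  moreover have "seg ?\<nu> a c = \<omega>" by (rule seg_eq[OF h(1)]) (use h ac in \<open>auto simp: fun_eq_iff le_fun_def\<close>)
  moreover have "cc lam y a b = seg ?\<nu> a b" by (rule cc_any) (use ab bc in \<open>auto simp: le_fun_def intro: trans_le_add2 order_trans\<close>)
  moreover have "cc lam y b c = seg ?\<nu> b c" by (rule cc_any) (use ab bc in \<open>auto simp: le_fun_def intro: trans_le_add2 order_trans\<close>)
  moreover have "cc lam y a c = seg ?\<nu> a c" by (rule cc_any) (use ac in \<open>auto simp: le_fun_def intro: trans_le_add2 order_trans\<close>)
  ultimately show "cc lam y a c = cmp (cc lam y a b) (cc lam y b c)" using w by simp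
qed

lemma cc_start: "cc lam y 0 (d lam) = lam"
proof -
  let ?\<nu> = "cmp lam (y 0 (d lam))"
  have yL: "y 0 (d lam) \<in> L" "r (y 0 (d lam)) = y 0 0" using pathD[OF yP, of 0 "d lam"] by auto
  have "tri ?\<nu> (r lam) lam (y 0 (d lam))"
    unfolding tri_def using rsV[OF lamL] idl[OF lamL] lamL yL sl by auto
  then have "seg ?\<nu> 0 (d lam) = lam" by (rule seg_eq) (use rsV[OF lamL] in auto)
  then show ?thesis by (simp add: cc_def)
qed

lemma cc_shift: assumes "a \<le> b" shows "cc lam y (a + d lam) (b + d lam) = y a b"
proof -
  let ?\<nu> = "cmp lam (y 0 b)"
  have 1: "y 0 a \<in> L" "r (y 0 a) = y 0 0" "s (y 0 a) = y a a" "d (y 0 a) = a" using pathD[OF yP, of 0 a] by auto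
  have 2: "y a b \<in> L" "r (y a b) = y a a" "s (y a b) = y b b" "d (y a b) = b - a" using pathD[OF yP, of a b] assms by auto
  have 3: "y b b \<in> L" "r (y b b) = y b b" using pathD[OF yP, of b b] by auto
  have 4: "cmp lam (y 0 b) \<in> L" "s (cmp lam (y 0 b)) = y b b" using cmpL[OF lamL, of "y 0 b"] pathD[OF yP, of 0 b] sl by auto
  have e: "y 0 b = cmp (y 0 a) (y a b)" using pathC[OF yP, of 0 a b] assms by auto
  have c: "cmp lam (y 0 a) \<in> L" "s (cmp lam (y 0 a)) = y a a" "d (cmp lam (y 0 a)) = d lam + a"
    using cmpL[OF lamL 1(1)] 1 sl by auto
  have "tri ?\<nu> (cmp lam (y 0 a)) (y a b) (y b b)"
    unfolding tri_def using c 2 3 idr[OF 2(1)] idr[OF 4(1)] 4 e assoc[OF lamL 1(1) 2(1)] 1 sl by auto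
  then have "seg ?\<nu> (a + d lam) (b + d lam) = y a b"
    by (rule seg_eq) (use c 2 assms in \<open>auto simp: fun_eq_iff le_fun_def\<close>)
  moreover have "cc lam y (a + d lam) (b + d lam) = seg ?\<nu> (a + d lam) (b + d lam)"
    by (rule cc_any) (use assms in \<open>auto simp: le_fun_def\<close>)
  ultimately show ?thesis by simp
qed

end

lemma add_le_add_fun: "(a::'k \<Rightarrow> nat) \<le> b \<Longrightarrow> a + l \<le> b + l" by (simp add: le_fun_def)
lemma add_diff_fun: "(b + l) - (a + l) = (b::'k \<Rightarrow> nat) - a" by (simp add: fun_eq_iff)

lemma shift_path: assumes "x \<in> P" shows "kg_shift l x \<in> P"
  unfolding kg_paths_def
proof (intro CollectI conjI allI impI)
  fix m n :: "'k \<Rightarrow> nat" assume "\<not> m \<le> n" then show "kg_shift l x m n = undefined" by (simp add: kg_shift_def)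
next
  fix m n :: "'k \<Rightarrow> nat" assume mn: "m \<le> n"
  have e: "kg_shift l x m n = x (m + l) (n + l)" "kg_shift l x m m = x (m + l) (m + l)" "kg_shift l x n n = x (n + l) (n + l)"
    using mn by (simp_all add: kg_shift_def)
  have "x (m + l) (n + l) \<in> L \<and> d (x (m + l) (n + l)) = (n + l) - (m + l) \<and> r (x (m + l) (n + l)) = x (m + l) (m + l) \<and> s (x (m + l) (n + l)) = x (n + l) (n + l)"
    by (rule pathD[OF assms add_le_add_fun[OF mn]])
  then show "kg_shift l x m n \<in> L" "d (kg_shift l x m n) = n - m" "r (kg_shift l x m n) = kg_shift l x m m"
      "s (kg_shift l x m n) = kg_shift l x n n" using e add_diff_fun by auto
next
  fix a m n :: "'k \<Rightarrow> nat" assume am: "a \<le> m" and mn: "m \<le> n"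
  have an: "a \<le> n" using am mn by (rule order_trans)
  show "kg_shift l x a n = cmp (kg_shift l x a m) (kg_shift l x m n)"
    using am mn an pathC[OF assms add_le_add_fun[OF am] add_le_add_fun[OF mn]] by (simp add: kg_shift_def)
qed

lemma shift_iter: assumes "x \<in> P" shows "(kg_shift p ^^ n) x = kg_shift (\<lambda>i. n * p i) x"
proof (induction n)
  case 0
  have "(\<lambda>i::'k. 0 * p i) = 0" by (simp add: fun_eq_iff)
  have z2: "\<And>a::'k\<Rightarrow>nat. a + (\<lambda>i. 0) = a" by (simp add: fun_eq_iff)
  then show ?case using pathU[OF assms] by (auto simp: kg_shift_def fun_eq_iff z2)
next
  case (Suc n)
  have 1: "\<And>a. a + p + (\<lambda>i. n * p i) = a + (\<lambda>i. Suc n * p i)" by (simp add: fun_eq_iff)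
  show ?case using Suc add_le_add_fun[of _ _ p] by (auto simp: kg_shift_def fun_eq_iff 1)
qed

lemma chain: assumes "x \<in> P" "y \<in> P" "x 0 (\<lambda>i. T * p i) \<noteq> y 0 (\<lambda>i. T * p i)"
  shows "\<exists>t\<le>T. x (\<lambda>i. t * p i) (\<lambda>i. (t + 1) * p i) \<noteq> y (\<lambda>i. t * p i) (\<lambda>i. (t + 1) * p i)"
  using assms(3)
proof (induction T)
  case 0
  have z: "(\<lambda>i::'k. 0 * p i) = 0" by (simp add: fun_eq_iff)
  have "x 0 (\<lambda>i. (0 + 1) * p i) \<noteq> y 0 (\<lambda>i. (0 + 1) * p i)"
    using prefix[OF assms(1,2), of 0 0 "\<lambda>i. (0 + 1) * p i"] 0 z by auto
  then show ?case using z by auto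
next
  case (Suc T)
  let ?A = "\<lambda>i::'k. T * p i" and ?B = "\<lambda>i::'k. Suc T * p i"
  have AB: "?A \<le> ?B" by (simp add: le_fun_def)
  show ?case
  proof (cases "x 0 ?A = y 0 ?A")
    case True
    have c1: "x 0 ?B = cmp (x 0 ?A) (x ?A ?B)" by (rule pathC[OF assms(1)]) (auto simp: le_fun_def)
    have c2: "y 0 ?B = cmp (y 0 ?A) (y ?A ?B)" by (rule pathC[OF assms(2)]) (auto simp: le_fun_def)
    have "x ?A ?B \<noteq> y ?A ?B"
      using True Suc.prems c1 c2 by metis
    then show ?thesis by (intro exI[of _ T]) auto
  next
    case False
    then show ?thesis using Suc.IH by (meson le_Suc_eq)
  qed
qed

lemma metric_ge: assumes "j \<le> M" "x (\<lambda>i. j * q i) (\<lambda>i. (j + 1) * q i) \<noteq> y (\<lambda>i. j * q i) (\<lambda>i. (j + 1) * q i)"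
  shows "kg_metric q x y \<ge> (1/2) ^ M"
proof -
  define D where "D = {n::nat. x (\<lambda>i. n * q i) (\<lambda>i. (n + 1) * q i) \<noteq> y (\<lambda>i. n * q i) (\<lambda>i. (n + 1) * q i)}"
  have jD: "j \<in> D" using assms D_def by auto
  then have "(LEAST n. n \<in> D) \<le> M" using assms(1) Least_le[of "\<lambda>n. n \<in> D" j] by linarith
  then have "(1/2::real) ^ M \<le> (1/2) ^ (LEAST n. n \<in> D)" by (intro power_decreasing) auto
  moreover have "kg_metric q x y = (1/2) ^ (LEAST n. n \<in> D)" using jD unfolding kg_metric_def D_def[symmetric] by auto
  ultimately show ?thesis by simp
qed

lemma expansive: assumes "\<forall>i. p i \<ge> 1" "\<forall>i. q i \<ge> 1"
  shows "positively_expansive_on P (kg_metric q) (kg_shift p)"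
  unfolding positively_expansive_on_def
proof (intro exI[of _ "(1/2::real) ^ (\<Sum>i\<in>UNIV. p i)"] conjI ballI impI)
  let ?M = "\<Sum>i\<in>UNIV. p i"
  show "(0::real) < (1/2) ^ ?M" by simp
  fix x y assume xP: "x \<in> P" and yP: "y \<in> P" and xy: "x \<noteq> y"
  then obtain m n where mn: "x m n \<noteq> y m n" by (auto simp: fun_eq_iff)
  have mn': "m \<le> n" using mn pathU[OF xP] pathU[OF yP] by metis
  have 1: "x 0 n \<noteq> y 0 n" using prefix[OF xP yP, of 0 m n] mn' mn by auto
  define T where "T = (\<Sum>i\<in>UNIV. n i)"
  have nT: "n \<le> (\<lambda>i. T * p i)"
  proof -
    have "n i \<le> T * p i" for i
    proof -
      have "n i \<le> T" unfolding T_def by (rule member_le_sum) auto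
      also have "T \<le> T * p i" using assms(1) by simp
      finally show ?thesis .
    qed
    then show ?thesis by (simp add: le_fun_def)
  qed
  have "x 0 (\<lambda>i. T * p i) \<noteq> y 0 (\<lambda>i. T * p i)" using prefix[OF xP yP, of 0 n "\<lambda>i. T * p i"] nT 1 by auto
  then obtain t where t: "x (\<lambda>i. t * p i) (\<lambda>i. (t + 1) * p i) \<noteq> y (\<lambda>i. t * p i) (\<lambda>i. (t + 1) * p i)"
    using chain[OF xP yP] by blast
  define x' where "x' = kg_shift (\<lambda>i. t * p i) x"
  define y' where "y' = kg_shift (\<lambda>i. t * p i) y"
  have x'P: "x' \<in> P" and y'P: "y' \<in> P" using shift_path xP yP x'_def y'_def by auto
  have e: "0 + (\<lambda>i. t * p i) = (\<lambda>i. t * p i)" "p + (\<lambda>i. t * p i) = (\<lambda>i. (t + 1) * p i)" by (auto simp: fun_eq_iff)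
  have "x' 0 p \<noteq> y' 0 p" using t unfolding x'_def y'_def kg_shift_def by (simp add: e le_fun_def)
  moreover have pM: "p \<le> (\<lambda>i. ?M * q i)"
  proof -
    have "p i \<le> ?M * q i" for i
    proof -
      have "p i \<le> ?M" by (rule member_le_sum) auto
      also have "?M \<le> ?M * q i" using assms(2) by simp
      finally show ?thesis .
    qed
    then show ?thesis by (simp add: le_fun_def)
  qed
  ultimately have "x' 0 (\<lambda>i. ?M * q i) \<noteq> y' 0 (\<lambda>i. ?M * q i)" using prefix[OF x'P y'P, of 0 p "\<lambda>i. ?M * q i"] pM by auto
  then obtain j where "j \<le> ?M" "x' (\<lambda>i. j * q i) (\<lambda>i. (j + 1) * q i) \<noteq> y' (\<lambda>i. j * q i) (\<lambda>i. (j + 1) * q i)"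
    using chain[OF x'P y'P] by blast
  then have "kg_metric q x' y' \<ge> (1/2) ^ ?M" by (rule metric_ge)
  then show "\<exists>n. (1/2) ^ ?M \<le> kg_metric q ((kg_shift p ^^ n) x) ((kg_shift p ^^ n) y)"
    using shift_iter[OF xP] shift_iter[OF yP] x'_def y'_def by metis
qed

abbreviation "Cyl \<equiv> kg_cylinder L r s cmp d ` L"

lemma open_nbhd: assumes "generate_topology_on Cyl V"
  shows "\<forall>x\<in>V \<inter> P. \<exists>m. \<forall>y\<in>P. y 0 m = x 0 m \<longrightarrow> y \<in> V"
  using assms
proof (induction rule: generate_topology_on.induct)
  case Empty then show ?case by simp
next
  case (Int a b)
  show ?case
  proof
    fix x assume x: "x \<in> a \<inter> b \<inter> P"
    then obtain m1 m2 where m1: "\<forall>y\<in>P. y 0 m1 = x 0 m1 \<longrightarrow> y \<in> a" and m2: "\<forall>y\<in>P. y 0 m2 = x 0 m2 \<longrightarrow> y \<in> b"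
      using Int.IH by blast
    have le: "m1 \<le> sup m1 m2" "m2 \<le> sup m1 m2" by auto
    show "\<exists>m. \<forall>y\<in>P. y 0 m = x 0 m \<longrightarrow> y \<in> a \<inter> b"
    proof (intro exI ballI impI)
      fix y assume yP: "y \<in> P" and e: "y 0 (sup m1 m2) = x 0 (sup m1 m2)"
      have "y 0 m1 = x 0 m1" using prefix[OF yP, of x 0 m1 "sup m1 m2"] x e le by auto
      moreover have "y 0 m2 = x 0 m2" using prefix[OF yP, of x 0 m2 "sup m1 m2"] x e le by auto
      ultimately show "y \<in> a \<inter> b" using m1 m2 yP by auto
    qed
  qed
next
  case (UN K)
  show ?case
  proof
    fix x assume "x \<in> \<Union>K \<inter> P"
    then obtain k where "k \<in> K" "x \<in> k" "x \<in> P" by auto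
    then obtain m where "\<forall>y\<in>P. y 0 m = x 0 m \<longrightarrow> y \<in> k" using UN.IH by blast
    then show "\<exists>m. \<forall>y\<in>P. y 0 m = x 0 m \<longrightarrow> y \<in> \<Union>K" using \<open>k \<in> K\<close> by blast
  qed
next
  case (Basis c)
  then obtain lam where lam: "lam \<in> L" "c = kg_cylinder L r s cmp d lam" by auto
  show ?case
  proof
    fix x assume "x \<in> c \<inter> P"
    then have "x 0 (d lam) = lam" using lam by (simp add: kg_cylinder_def)
    then show "\<exists>m. \<forall>y\<in>P. y 0 m = x 0 m \<longrightarrow> y \<in> c" using lam by (intro exI[of _ "d lam"]) (auto simp: kg_cylinder_def)
  qed
qed

lemma topspace_eq: "topspace (kg_topology L r s cmp d) = P"
proof -
  have "P \<subseteq> \<Union>Cyl"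
  proof
    fix x assume xP: "x \<in> P"
    have "x 0 0 \<in> L" "d (x 0 0) = 0" using pathD[OF xP, of 0 0] by auto
    then show "x \<in> \<Union>Cyl" using xP by (auto simp: kg_cylinder_def intro!: bexI[of _ "x 0 0"])
  qed
  then show ?thesis unfolding kg_topology_def by (auto simp: topspace_subtopology)
qed

lemma vert: "v \<in> L \<Longrightarrow> d v = 0 \<Longrightarrow> v \<in> kg_vertices L r s"
  using deg0 by (auto simp: kg_vertices_def)

lemma exact: assumes sf: "kg_source_free L r s d" and pr: "kg_primitive L r s d" and p1: "\<forall>i. p i \<ge> 1"
  shows "exact_map (kg_topology L r s cmp d) (kg_shift p)"
  unfolding exact_map_def topspace_eq
proof (intro allI impI)
  fix U assume "openin (kg_topology L r s cmp d) U" "U \<noteq> {}"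
  then obtain V where V: "generate_topology_on Cyl V" "U = V \<inter> P"
    unfolding kg_topology_def openin_subtopology openin_topology_generated_by_iff by blast
  obtain x where xU: "x \<in> U" using \<open>U \<noteq> {}\<close> by blast
  then have xP: "x \<in> P" using V by auto
  obtain m where m: "\<forall>y\<in>P. y 0 m = x 0 m \<longrightarrow> y \<in> V" using open_nbhd[OF V(1)] xU V by blast
  obtain n0 where n0: "\<forall>v\<in>kg_vertices L r s. \<forall>w\<in>kg_vertices L r s. \<exists>lam\<in>L. d lam = n0 \<and> r lam = v \<and> s lam = w"
    using pr unfolding kg_primitive_def by blast
  define N where "N = (\<Sum>i\<in>UNIV. m i + n0 i)"
  have Nle: "m + n0 \<le> (\<lambda>i. N * p i)"
  proof -
    have "m i + n0 i \<le> N * p i" for i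
    proof -
      have "m i + n0 i \<le> N" unfolding N_def by (rule member_le_sum[of _ _ "\<lambda>i. m i + n0 i"]) auto
      also have "N \<le> N * p i" using p1 by simp
      finally show ?thesis .
    qed
    then show ?thesis by (simp add: le_fun_def)
  qed
  define e where "e = (\<lambda>i. N * p i) - (m + n0)"
  have UP: "U \<subseteq> P" using V by auto
  show "\<exists>n. (kg_shift p ^^ n) ` U = P"
  proof (intro exI[of _ N] equalityI subsetI)
    fix z assume "z \<in> (kg_shift p ^^ N) ` U"
    then obtain u where "u \<in> U" "z = (kg_shift p ^^ N) u" by auto
    then show "z \<in> P" using UP shift_iter shift_path by auto
  next
    fix y assume yP: "y \<in> P"
    let ?\<mu> = "x 0 m"
    have mu: "?\<mu> \<in> L" "d ?\<mu> = m" "s ?\<mu> = x m m" using pathD[OF xP, of 0 m] by auto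
    have xmm: "x m m \<in> kg_vertices L r s" using pathD[OF xP, of m m] vert by auto
    obtain \<alpha> where al: "\<alpha> \<in> L" "r \<alpha> = x m m" "d \<alpha> = e" using sf xmm unfolding kg_source_free_def by blast
    have sa: "s \<alpha> \<in> kg_vertices L r s" using rsV[OF al(1)] vert by auto
    have y00: "y 0 0 \<in> kg_vertices L r s" using pathD[OF yP, of 0 0] vert by auto
    obtain \<beta> where be: "\<beta> \<in> L" "d \<beta> = n0" "r \<beta> = s \<alpha>" "s \<beta> = y 0 0" using n0 sa y00 by blast
    have ab: "cmp \<alpha> \<beta> \<in> L" "r (cmp \<alpha> \<beta>) = x m m" "s (cmp \<alpha> \<beta>) = y 0 0" "d (cmp \<alpha> \<beta>) = e + n0"
      using cmpL[OF al(1) be(1)] be al by auto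
    define lam where "lam = cmp ?\<mu> (cmp \<alpha> \<beta>)"
    have lam: "lam \<in> L" "s lam = y 0 0" "d lam = m + (e + n0)"
      using cmpL[OF mu(1) ab(1)] mu ab unfolding lam_def by auto
    have dl: "d lam = (\<lambda>i. N * p i)"
    proof (rule ext)
      fix i have "m i + n0 i \<le> N * p i" using Nle by (simp add: le_fun_def)
      then show "d lam i = N * p i" using lam(3) unfolding e_def by simp
    qed
    define z where "z = cc lam y"
    have zP: "z \<in> P" unfolding z_def by (rule cc_path[OF lam(1) yP lam(2)])
    have z0: "z 0 (d lam) = lam" unfolding z_def by (rule cc_start[OF lam(1) yP lam(2)])
    have "m \<le> d lam" using lam(3) by (simp add: le_fun_def)
    then have zc: "z 0 (d lam) = cmp (z 0 m) (z m (d lam))" using pathC[OF zP, of 0 m "d lam"] by auto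
    have "z 0 m = ?\<mu> \<and> z m (d lam) = cmp \<alpha> \<beta>"
    proof (rule fac_uniq)
      show "cmp (z 0 m) (z m (d lam)) = cmp ?\<mu> (cmp \<alpha> \<beta>)" using zc z0 lam_def by simp
    qed (use pathD[OF zP, of 0 m] pathD[OF zP, of m "d lam"] \<open>m \<le> d lam\<close> mu ab in auto)
    then have "z \<in> V" using m zP by auto
    then have zU: "z \<in> U" using V zP by auto
    have "kg_shift (\<lambda>i. N * p i) z = y"
    proof (intro ext)
      fix a b
      show "kg_shift (\<lambda>i. N * p i) z a b = y a b"
      proof (cases "a \<le> b")
        case True
        then show ?thesis using cc_shift[OF lam(1) yP lam(2) True] dl unfolding kg_shift_def z_def by simp
      next
        case False
        then show ?thesis using pathU[OF yP False] by (simp add: kg_shift_def)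
      qed
    qed
    then show "y \<in> (kg_shift p ^^ N) ` U" using shift_iter[OF zP] zU by (metis image_eqI)
  qed
qed

end

theorem lemma6p6:
  fixes L :: "'a set" and r s :: "'a \<Rightarrow> 'a" and cmp :: "'a \<Rightarrow> 'a \<Rightarrow> 'a"
    and d :: "'a \<Rightarrow> ('k::finite \<Rightarrow> nat)" and p :: "'k \<Rightarrow> nat"
  assumes "is_kgraph L r s cmp d"
    and "kg_source_free L r s d"
    and "kg_finite L d"
    and "kg_primitive L r s d"
    and "kg_vertices L r s \<noteq> {}"
    and "\<forall>i. p i \<ge> 1"
  shows "(\<forall>q::'k \<Rightarrow> nat. (\<forall>i. q i \<ge> 1) \<longrightarrow>
            positively_expansive_on (kg_paths L r s cmp d) (kg_metric q) (kg_shift p))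
         \<and> exact_map (kg_topology L r s cmp d) (kg_shift p)"
proof -
  interpret kg L r s cmp d by unfold_locales (rule assms(1))
  show ?thesis using expansive[OF assms(6)] exact[OF assms(2,4,6)] by blast
qed

end
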